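(* Let $\mathbf A$ be a Mal'cev algebra, let $n\ge 1$, and let $\alpha_0,\dots,\alpha_{n-1}$ be congruences of $\mathbf A$. Then \[ [\alpha_0,\dots,\alpha_{n-1}] = \psi_{2^n-1}\big(\Delta(\alpha_0,\dots,\alpha_{n-1})\big). \]
   Context: A Mal'cev algebra is an algebra having a ternary term operation $q$ with $q(x,x,y)=y=q(y,x,x)$ for all $x,y$. Higher commutator (Bulatov): for congruences $\alpha_0,\dots,\alpha_{n-1},\gamma$ of $\mathbf A$, say $\alpha_0,\dots,\alpha_{n-2}$ centralize $\alpha_{n-1}$ modulo $\gamma$ if for all tuples $\mathbf a_i,\mathbf b_i$ ($i<n$, of arbitrary lengths, with $\mathbf a_i\neq\mathbf b_i$ and $\mathbf a_i,\mathbf b_i$ congruent modulo $\alpha_i$ coordinatewise) and every term operation $t$ of $\mathbf A$ such that $t(\mathbf x_0,\dots,\mathbf x_{n-2},\mathbf a_{n-1})\equiv_\gamma t(\mathbf x_0,\dots,\mathbf x_{n-2},\mathbf b_{n-1})$ for all $(\mathbf x_0,\dots,\mathbf x_{n-2})\in(\{\mathbf a_0,\mathbf b_0\}\times\dots\times\{\mathbf a_{n-2},\mathbf b_{n-2}\})\setminus\{(\mathbf b_0,\dots,\mathbf b_{n-2})\}$, we have $t(\mathbf b_0,\dots,\mathbf b_{n-2},\mathbf a_{n-1})\equiv_\gamma t(\mathbf b_0,\dots,\mathbf b_{n-2},\mathbf b_{n-1})$. The commutator $[\alpha_0,\dots,\alpha_{n-1}]$ is the smallest congruence $\gamma$ such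 that $\alpha_0,\dots,\alpha_{n-2}$ centralize $\alpha_{n-1}$ modulo $\gamma$. Tuples in $A^m$ are indexed by $0,\dots,m-1$. For an integer $k\ge 0$ and $i\ge0$, $k_{(i)}\in\{0,1\}$ denotes the $i$-th binary digit of $k$ (counting from the least significant digit, starting at $0$), so $k=\sum_i 2^ik_{(i)}$. For $a,b\in A$ and $i<n$, $\mathbf c_i^n(a,b)\in A^{2^n}$ is the tuple whose $k$-th coordinate ($k<2^n$) is $a$ if $k_{(i)}=0$ and $b$ if $k_{(i)}=1$. For congruences $\alpha_0,\dots,\alpha_{n-1}$, $\Delta(\alpha_0,\dots,\alpha_{n-1})=\Delta_{\mathbf A}(\alpha_0,\dots,\alpha_{n-1})$ is the subuniverse of $\mathbf A^{2^n}$ generated by $\{\mathbf c_i^n(a,b): i<n,\ (a,b)\in\alpha_i\}$; for $n=0$, $\Delta()=A$. Forks: for $R\subseteq A^m$ and $i<m$, $\psi_i(R)$ is the set of pairs $(a,b)$ for which there exist $\mathbf c,\mathbf d\in R$ with $c_i=a$, $d_i=b$ and $c_j=d_j$ for all $j\neq i$. *)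

theory Defs
  imports Main
begin

text \<open>An algebra is given by a carrier set A and a set F of fundamental operations;
  an operation is a pair (k, f) of an arity k and a function f acting on argument lists
  of length k.\<close>

type_synonym 'a operation = "nat \<times> ('a list \<Rightarrow> 'a)"

definition algebra :: "'a set \<Rightarrow> 'a operation set \<Rightarrow> bool" where
  "algebra A F \<longleftrightarrow>
     (\<forall>(k, f) \<in> F. \<forall>xs. length xs = k \<and> set xs \<subseteq> A \<longrightarrow> f xs \<in> A)"

text \<open>Term operations (the clone generated by the fundamental operations):
  (m, t) means t is an m-ary term operation.\<close>

inductive_set term_ops :: "'a operation set \<Rightarrow> 'a operation set" for F where
  proj: "i < m \<Longrightarrow> (m, \<lambda>xs. xs ! i) \<in> term_ops F"
| comp: "(k, f) \<in> F \<Longrightarrow> (\<forall>j<k. (m, g j) \<in> term_ops F) \<Longrightarrow>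
         (m, \<lambda>xs. f (map (\<lambda>j. g j xs) [0..<k])) \<in> term_ops F"

definition malcev :: "'a set \<Rightarrow> 'a operation set \<Rightarrow> bool" where
  "malcev A F \<longleftrightarrow> (\<exists>q. (3, q) \<in> term_ops F \<and>
      (\<forall>x\<in>A. \<forall>y\<in>A. q [x, x, y] = y \<and> q [y, x, x] = y))"

definition congruence :: "'a set \<Rightarrow> 'a operation set \<Rightarrow> ('a \<times> 'a) set \<Rightarrow> bool" where
  "congruence A F \<theta> \<longleftrightarrow> \<theta> \<subseteq> A \<times> A \<and> equiv A \<theta> \<and>
     (\<forall>(k, f) \<in> F. \<forall>xs ys. length xs = k \<and> length ys = k \<and>
        list_all2 (\<lambda>x y. (x, y) \<in> \<theta>) xs ys \<longrightarrow> (f xs, f ys) \<in> \<theta>)"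

definition cargs :: "nat \<Rightarrow> nat set \<Rightarrow> (nat \<Rightarrow> 'a list) \<Rightarrow> (nat \<Rightarrow> 'a list) \<Rightarrow> 'a list \<Rightarrow> 'a list" where
  "cargs n S a b c = concat (map (\<lambda>i. if i \<in> S then b i else a i) [0..<n - 1]) @ c"

text \<open>alpha 0, ..., alpha (n-2) centralize alpha (n-1) modulo gamma (Bulatov).\<close>

definition centralizes ::
  "'a set \<Rightarrow> 'a operation set \<Rightarrow> nat \<Rightarrow> (nat \<Rightarrow> ('a \<times> 'a) set) \<Rightarrow> ('a \<times> 'a) set \<Rightarrow> bool" where
  "centralizes A F n \<alpha> \<gamma> \<longleftrightarrow>
     (\<forall>a b :: nat \<Rightarrow> 'a list. \<forall>t.
        (\<forall>i<n. length (a i) = length (b i) \<and> a i \<noteq> b i \<and>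
               list_all2 (\<lambda>x y. (x, y) \<in> \<alpha> i) (a i) (b i)) \<longrightarrow>
        ((\<Sum>i<n. length (a i)), t) \<in> term_ops F \<longrightarrow>
        (\<forall>S. S \<subseteq> {..<n - 1} \<and> S \<noteq> {..<n - 1} \<longrightarrow>
             (t (cargs n S a b (a (n - 1))), t (cargs n S a b (b (n - 1)))) \<in> \<gamma>) \<longrightarrow>
        (t (cargs n {..<n - 1} a b (a (n - 1))), t (cargs n {..<n - 1} a b (b (n - 1)))) \<in> \<gamma>)"

definition commutator ::
  "'a set \<Rightarrow> 'a operation set \<Rightarrow> nat \<Rightarrow> (nat \<Rightarrow> ('a \<times> 'a) set) \<Rightarrow> ('a \<times> 'a) set" where
  "commutator A F n \<alpha> = \<Inter>{\<gamma>. congruence A F \<gamma> \<and> centralizes A F n \<alpha> \<gamma>}"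

definition apply_cw :: "('a list \<Rightarrow> 'a) \<Rightarrow> nat \<Rightarrow> 'a list list \<Rightarrow> 'a list" where
  "apply_cw f m vs = map (\<lambda>j. f (map (\<lambda>v. v ! j) vs)) [0..<m]"

inductive_set gen_sub :: "'a operation set \<Rightarrow> nat \<Rightarrow> 'a list set \<Rightarrow> 'a list set"
  for F m G where
  gen: "v \<in> G \<Longrightarrow> v \<in> gen_sub F m G"
| op: "(k, f) \<in> F \<Longrightarrow> length vs = k \<Longrightarrow> (\<forall>v \<in> set vs. v \<in> gen_sub F m G) \<Longrightarrow>
       apply_cw f m vs \<in> gen_sub F m G"

definition ctuple :: "nat \<Rightarrow> nat \<Rightarrow> 'a \<Rightarrow> 'a \<Rightarrow> 'a list" where
  "ctuple n i a b = map (\<lambda>k. if bit k i then b else a) [0..<2 ^ n]"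

definition Delta ::
  "'a set \<Rightarrow> 'a operation set \<Rightarrow> nat \<Rightarrow> (nat \<Rightarrow> ('a \<times> 'a) set) \<Rightarrow> 'a list set" where
  "Delta A F n \<alpha> =
     (if n = 0 then {[x] | x. x \<in> A}
      else gen_sub F (2 ^ n) {ctuple n i a b | i a b. i < n \<and> (a, b) \<in> \<alpha> i})"

definition fork :: "nat \<Rightarrow> 'a list set \<Rightarrow> ('a \<times> 'a) set" where
  "fork i R = {(c ! i, d ! i) | c d. c \<in> R \<and> d \<in> R \<and> length c = length d \<and> i < length c \<and>
                 (\<forall>j < length c. j \<noteq> i \<longrightarrow> c ! j = d ! j)}"

end

theory Submission
  imports Defs
begin



lemma term_ops_subst:
  assumes "(m, t) \<in> term_ops F" "\<forall>j<m. (m', g j) \<in> term_ops F"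
  shows "(m', \<lambda>xs. t (map (\<lambda>j. g j xs) [0..<m])) \<in> term_ops F"
  using assms
proof (induction rule: term_ops.induct)
  case (proj i m)
  then show ?case by simp
next
  case (comp k f m h)
  have "(m', \<lambda>xs. f (map (\<lambda>j. (\<lambda>j xs. h j (map (\<lambda>l. g l xs) [0..<m])) j xs) [0..<k])) \<in> term_ops F"
    apply (rule term_ops.comp[OF comp(1)]) using comp by blast
  then show ?case by simp
qed

lemma term_ops_reindex:
  assumes "(m, t) \<in> term_ops F" "\<forall>j<m. \<sigma> j < m'"
  shows "(m', \<lambda>xs. t (map (\<lambda>j. xs ! \<sigma> j) [0..<m])) \<in> term_ops F"
  using term_ops_subst[OF assms(1), of m' "\<lambda>j xs. xs ! \<sigma> j"] assms(2) term_ops.proj by blast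

lemma term_ops_closed:
  assumes "algebra A F" "(m, t) \<in> term_ops F" "length xs = m" "set xs \<subseteq> A"
  shows "t xs \<in> A"
  using assms(2-4)
proof (induction arbitrary: xs rule: term_ops.induct)
  case (proj i m)
  then show ?case by auto
next
  case (comp k f m g)
  have "set (map (\<lambda>j. g j xs) [0..<k]) \<subseteq> A" using comp by auto
  then show ?case using assms(1) comp(1) unfolding algebra_def by auto
qed

lemma gen_sub_len:
  assumes "v \<in> gen_sub F m G" "\<forall>g\<in>G. length g = m"
  shows "length v = m"
  using assms by (induction rule: gen_sub.induct) (auto simp: apply_cw_def)

lemma gen_sub_A:
  assumes "algebra A F" "v \<in> gen_sub F m G" "\<forall>g\<in>G. length g = m \<and> set g \<subseteq> A"
  shows "set v \<subseteq> A"
  using assms(2,3)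
proof (induction rule: gen_sub.induct)
  case (gen v)
  then show ?case by auto
next
  case (op k f vs)
  have L: "\<forall>v\<in>set vs. length v = m" using op gen_sub_len by blast
  show ?case
  proof
    fix x assume "x \<in> set (apply_cw f m vs)"
    then obtain j where j: "j < m" "x = f (map (\<lambda>v. v ! j) vs)" by (auto simp: apply_cw_def)
    have "\<forall>v\<in>set vs. v ! j \<in> A" using op L j by (metis nth_mem subsetD)
    then have "set (map (\<lambda>v. v ! j) vs) \<subseteq> A" by auto
    then show "x \<in> A" using assms(1) op(1,2) j unfolding algebra_def by auto
  qed
qed

lemma gen_sub_term:
  assumes "(L, t) \<in> term_ops F" "length gs = L" "set gs \<subseteq> gen_sub F m G" "\<forall>g\<in>G. length g = m"
  shows "apply_cw t m gs \<in> gen_sub F m G"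
  using assms(1-3)
proof (induction arbitrary: gs rule: term_ops.induct)
  case (proj i L)
  have "gs ! i \<in> gen_sub F m G" using proj by auto
  then have "length (gs ! i) = m" using gen_sub_len assms(4) by blast
  then have "apply_cw (\<lambda>xs. xs ! i) m gs = gs ! i" using proj
    by (auto simp: apply_cw_def intro: nth_equalityI)
  then show ?case using \<open>gs ! i \<in> gen_sub F m G\<close> by simp
next
  case (comp k f L h)
  have e: "apply_cw (\<lambda>xs. f (map (\<lambda>j. h j xs) [0..<k])) m gs
        = apply_cw f m (map (\<lambda>j. apply_cw (h j) m gs) [0..<k])"
    by (auto simp: apply_cw_def comp_def intro!: nth_equalityI)
  have "apply_cw f m (map (\<lambda>j. apply_cw (h j) m gs) [0..<k]) \<in> gen_sub F m G"
    apply (rule gen_sub.op[OF comp(1)]) using comp by auto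
  then show ?case using e by simp
qed


lemma len_concat_upt: "length (concat (map f [0..<k])) = (\<Sum>l<k. length (f l))"
  by (induction k) auto

lemma off_le: "(j::nat) < k \<Longrightarrow> (\<Sum>l<j. g l) + g j \<le> (\<Sum>l<k. (g l::nat))"
proof -
  assume "j < k"
  have "(\<Sum>l<j. g l) + g j = (\<Sum>l<Suc j. g l)" by simp
  also have "\<dots> \<le> (\<Sum>l<k. g l)" using \<open>j < k\<close> by (intro sum_mono2) auto
  finally show ?thesis .
qed

lemma nth_concat_off:
  "j < k \<Longrightarrow> i < length (f j) \<Longrightarrow> concat (map f [0..<k]) ! ((\<Sum>l<j. length (f l)) + i) = f j ! i"
proof (induction k)
  case 0
  then show ?case by simp
next
  case (Suc k)
  have c: "concat (map f [0..<Suc k]) = concat (map f [0..<k]) @ f k" by simp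
  show ?case
  proof (cases "j < k")
    case True
    have "(\<Sum>l<j. length (f l)) + i < (\<Sum>l<k. length (f l))"
      using off_le[OF True, of "\<lambda>l. length (f l)"] Suc.prems by linarith
    then show ?thesis using c Suc True by (simp add: nth_append len_concat_upt)
  next
    case False
    then have "j = k" using Suc by simp
    then show ?thesis using c by (simp add: nth_append len_concat_upt)
  qed
qed

lemma gen_sub_repr:
  assumes "v \<in> gen_sub F m G" "\<forall>g\<in>G. length g = m"
  shows "\<exists>gs t. set gs \<subseteq> G \<and> (length gs, t) \<in> term_ops F \<and> v = apply_cw t m gs"
  using assms(1)
proof (induction rule: gen_sub.induct)
  case (gen v)
  have "length v = m" using gen assms(2) by auto
  then have "apply_cw (\<lambda>xs. xs ! 0) m [v] = v" by (auto simp: apply_cw_def intro: nth_equalityI)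
  moreover have "(length [v], \<lambda>xs. xs ! 0) \<in> term_ops F" using term_ops.proj[of 0 1] by simp
  ultimately show ?case using gen by (intro exI[of _ "[v]"] exI[of _ "\<lambda>xs. xs!0"]) auto
next
  case (op k f vs)
  have "\<forall>j<k. \<exists>gs t. set gs \<subseteq> G \<and> (length gs, t) \<in> term_ops F \<and> vs ! j = apply_cw t m gs"
    using op by auto
  then obtain GS T where GT: "\<forall>j<k. set (GS j) \<subseteq> G \<and> (length (GS j), T j) \<in> term_ops F \<and> vs ! j = apply_cw (T j) m (GS j)"
    by metis
  define off where "off j = (\<Sum>l<j. length (GS l))" for j
  define gs where "gs = concat (map GS [0..<k])"
  define T' where "T' j = (\<lambda>xs. T j (map (\<lambda>i. xs ! (off j + i)) [0..<length (GS j)]))" for j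
  define t where "t = (\<lambda>xs. f (map (\<lambda>j. T' j xs) [0..<k]))"
  have lg: "length gs = off k" unfolding gs_def off_def by (simp add: len_concat_upt)
  have T'op: "\<forall>j<k. (off k, T' j) \<in> term_ops F"
  proof (intro allI impI)
    fix j assume j: "j < k"
    have "\<forall>i<length (GS j). off j + i < off k"
      using off_le[OF j, of "\<lambda>l. length (GS l)"] unfolding off_def by auto
    then show "(off k, T' j) \<in> term_ops F" unfolding T'_def
      using term_ops_reindex GT j by blast
  qed
  have top: "(length gs, t) \<in> term_ops F" unfolding t_def lg
    by (rule term_ops.comp) (use op T'op in auto)
  have sg: "set gs \<subseteq> G" unfolding gs_def using GT by auto
  have "apply_cw f m vs = apply_cw t m gs"
  proof (rule nth_equalityI)
    show "length (apply_cw f m vs) = length (apply_cw t m gs)" by (simp add: apply_cw_def)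
    fix p assume "p < length (apply_cw f m vs)"
    then have p: "p < m" by (simp add: apply_cw_def)
    have "map (\<lambda>v. v ! p) vs = map (\<lambda>j. T' j (map (\<lambda>g. g ! p) gs)) [0..<k]"
    proof (rule nth_equalityI)
      show "length (map (\<lambda>v. v ! p) vs) = length (map (\<lambda>j. T' j (map (\<lambda>g. g ! p) gs)) [0..<k])"
        using op by simp
      fix j assume "j < length (map (\<lambda>v. v ! p) vs)"
      then have j: "j < k" using op by simp
      have "map (\<lambda>i. map (\<lambda>g. g ! p) gs ! (off j + i)) [0..<length (GS j)] = map (\<lambda>g. g ! p) (GS j)"
      proof (rule nth_equalityI)
        fix i assume "i < length (map (\<lambda>i. map (\<lambda>g. g ! p) gs ! (off j + i)) [0..<length (GS j)])"
        then have i: "i < length (GS j)" by simp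
        have "off j + i < length gs" using off_le[OF j, of "\<lambda>l. length (GS l)"] i lg unfolding off_def by simp
        then show "map (\<lambda>i. map (\<lambda>g. g ! p) gs ! (off j + i)) [0..<length (GS j)] ! i = map (\<lambda>g. g ! p) (GS j) ! i"
          using i nth_concat_off[of j k i GS, OF j i] unfolding gs_def off_def by simp
      qed simp
      then have "T' j (map (\<lambda>g. g ! p) gs) = T j (map (\<lambda>g. g ! p) (GS j))" unfolding T'_def by simp
      also have "\<dots> = vs ! j ! p" using GT j p by (simp add: apply_cw_def)
      finally show "map (\<lambda>v. v ! p) vs ! j = map (\<lambda>j. T' j (map (\<lambda>g. g ! p) gs)) [0..<k] ! j"
        using j op by simp
    qed
    then show "apply_cw f m vs ! p = apply_cw t m gs ! p" using p by (simp add: apply_cw_def t_def)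
  qed
  then show ?case using top sg by blast
qed




definition hs :: "nat \<Rightarrow> (nat \<Rightarrow> bool) \<Rightarrow> nat" where
  "hs n \<sigma> = horner_sum of_bool 2 (map \<sigma> [0..<n])"

lemma bit_hs: "bit (hs n \<sigma>) i \<longleftrightarrow> i < n \<and> \<sigma> i"
  unfolding hs_def by (auto simp: bit_horner_sum_bit_iff)

lemma hs_less: "hs n \<sigma> < 2 ^ n"
proof -
  have "take_bit n (hs n \<sigma>) = hs n \<sigma>"
    by (rule bit_eqI) (auto simp: bit_take_bit_iff bit_hs)
  then show ?thesis by (simp add: take_bit_nat_eq_self_iff)
qed

lemma bit_less_exp: "(k::nat) < 2 ^ n \<Longrightarrow> bit k i \<Longrightarrow> i < n"
  by (metis bit_take_bit_iff take_bit_nat_eq_self_iff)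

lemma eq_by_bits: "(k::nat) < 2 ^ n \<Longrightarrow> l < 2 ^ n \<Longrightarrow> (\<forall>i<n. bit k i \<longleftrightarrow> bit l i) \<Longrightarrow> k = l"
  by (metis bit_eqI bit_less_exp)

lemma bit_N: "bit ((2::nat) ^ n - 1) i \<longleftrightarrow> i < n"
  using bit_mask_iff[of n i, where 'a=nat] by (simp add: mask_eq_exp_minus_1)

lemma N_less: "(2::nat) ^ n - 1 < 2 ^ n"
  by simp

lemma xor_less: "(k::nat) < 2 ^ n \<Longrightarrow> l < 2 ^ n \<Longrightarrow> xor k l < 2 ^ n"
  by (metis take_bit_nat_eq_self_iff take_bit_xor)

lemma xor_xor: "xor (xor (k::nat) m) m = k"
  by (rule bit_eqI) (auto simp: bit_xor_iff)




lemma ctuple_len[simp]: "length (ctuple n i a b) = 2 ^ n"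
  by (simp add: ctuple_def)

lemma ctuple_nth: "k < 2 ^ n \<Longrightarrow> ctuple n i a b ! k = (if bit k i then b else a)"
  by (simp add: ctuple_def)

locale msetup =
  fixes A :: "'a set" and F :: "'a operation set" and n :: nat and \<alpha> :: "nat \<Rightarrow> ('a \<times> 'a) set"
  assumes alg: "algebra A F" and mal: "malcev A F" and n1: "n \<ge> 1"
    and cong: "\<forall>i<n. congruence A F (\<alpha> i)"
begin

definition Gen :: "'a list set" where
  "Gen = {ctuple n i a b | i a b. i < n \<and> (a, b) \<in> \<alpha> i}"

definition D :: "'a list set" where "D = gen_sub F (2 ^ n) Gen"

definition q :: "'a list \<Rightarrow> 'a" where
  "q = (SOME q. (3, q) \<in> term_ops F \<and> (\<forall>x\<in>A. \<forall>y\<in>A. q [x, x, y] = y \<and> q [y, x, x] = y))"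

lemma q_props: "(3, q) \<in> term_ops F" "x \<in> A \<Longrightarrow> y \<in> A \<Longrightarrow> q [x, x, y] = y"
  "x \<in> A \<Longrightarrow> y \<in> A \<Longrightarrow> q [y, x, x] = y"
  using someI_ex[OF mal[unfolded malcev_def]] unfolding q_def by auto

lemma Delta_eq: "Delta A F n \<alpha> = D"
  using n1 by (simp add: Delta_def D_def Gen_def)

lemma alpha_A: "i < n \<Longrightarrow> (x, y) \<in> \<alpha> i \<Longrightarrow> x \<in> A \<and> y \<in> A"
  using cong unfolding congruence_def by auto

lemma alpha_refl: "i < n \<Longrightarrow> x \<in> A \<Longrightarrow> (x, x) \<in> \<alpha> i"
  using cong unfolding congruence_def equiv_def refl_on_def by auto

lemma alpha_sym: "i < n \<Longrightarrow> (x, y) \<in> \<alpha> i \<Longrightarrow> (y, x) \<in> \<alpha> i"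
  using cong unfolding congruence_def equiv_def by (auto elim: symE)

lemma Gen_props: "\<forall>g\<in>Gen. length g = 2 ^ n \<and> set g \<subseteq> A"
  unfolding Gen_def ctuple_def using alpha_A by fastforce

lemma D_len: "v \<in> D \<Longrightarrow> length v = 2 ^ n"
  using gen_sub_len Gen_props unfolding D_def by blast

lemma D_A: "v \<in> D \<Longrightarrow> k < 2 ^ n \<Longrightarrow> v ! k \<in> A"
  using gen_sub_A[OF alg, of v "2^n" Gen] Gen_props D_len unfolding D_def by (metis nth_mem subsetD)

lemma D_q: "x \<in> D \<Longrightarrow> y \<in> D \<Longrightarrow> z \<in> D \<Longrightarrow> apply_cw q (2 ^ n) [x, y, z] \<in> D"
  unfolding D_def using gen_sub_term[OF q_props(1), of "[x,y,z]"] Gen_props by auto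

lemma apply_cw_q_nth: "k < 2 ^ n \<Longrightarrow> apply_cw q (2 ^ n) [x, y, z] ! k = q [x ! k, y ! k, z ! k]"
  by (simp add: apply_cw_def)

lemma D_perm:
  assumes "v \<in> D" "m < 2 ^ n"
  shows "map (\<lambda>l. v ! xor l m) [0..<2 ^ n] \<in> D"
  using assms(1) unfolding D_def
proof (induction rule: gen_sub.induct)
  case (gen v)
  then obtain i a b where v: "v = ctuple n i a b" "i < n" "(a, b) \<in> \<alpha> i" unfolding Gen_def by auto
  have "map (\<lambda>l. v ! xor l m) [0..<2 ^ n] = (if bit m i then ctuple n i b a else ctuple n i a b)"
    using v(1) assms(2) by (auto simp: ctuple_def bit_xor_iff xor_less intro!: nth_equalityI)
  moreover have "ctuple n i b a \<in> Gen" "ctuple n i a b \<in> Gen"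
    unfolding Gen_def using v alpha_sym[OF v(2,3)] by blast+
  ultimately show ?case by (auto intro: gen_sub.gen)
next
  case (op k f vs)
  have "map (\<lambda>l. apply_cw f (2 ^ n) vs ! xor l m) [0..<2 ^ n]
      = apply_cw f (2 ^ n) (map (\<lambda>v. map (\<lambda>l. v ! xor l m) [0..<2 ^ n]) vs)"
    using assms(2) by (auto simp: apply_cw_def xor_less comp_def intro!: nth_equalityI)
  moreover have "apply_cw f (2 ^ n) (map (\<lambda>v. map (\<lambda>l. v ! xor l m) [0..<2 ^ n]) vs) \<in> gen_sub F (2 ^ n) Gen"
    by (rule gen_sub.op) (use op in auto)
  ultimately show ?case by simp
qed

end



lemma xor_cancel: "xor (l::nat) (xor j N) = N \<Longrightarrow> l = j"
proof (rule bit_eqI)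
  fix i assume h: "xor l (xor j N) = N"
  have "bit (xor l (xor j N)) i = bit N i" using h by simp
  then show "bit l i = bit j i" by (auto simp: bit_xor_iff)
qed

lemma xor_back: "xor (j::nat) (xor j N) = N"
  by (rule bit_eqI) (auto simp: bit_xor_iff)

context msetup begin

lemma fork_I: "c \<in> D \<Longrightarrow> d \<in> D \<Longrightarrow> j < 2 ^ n \<Longrightarrow> (\<forall>l<2 ^ n. l \<noteq> j \<longrightarrow> c ! l = d ! l)
   \<Longrightarrow> (c ! j, d ! j) \<in> fork j D"
proof -
  assume a: "c \<in> D" "d \<in> D" "j < 2 ^ n" "\<forall>l<2 ^ n. l \<noteq> j \<longrightarrow> c ! l = d ! l"
  have "length c = 2 ^ n" "length d = 2 ^ n" using a D_len by auto
  then show ?thesis unfolding fork_def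
    by (intro CollectI exI[of _ c] exI[of _ d]) (use a in auto)
qed

lemma fork_E:
  assumes "(x, y) \<in> fork j D"
  obtains c d where "c \<in> D" "d \<in> D" "j < 2 ^ n" "\<forall>l<2 ^ n. l \<noteq> j \<longrightarrow> c ! l = d ! l"
    "c ! j = x" "d ! j = y"
proof -
  from assms obtain c d where a: "c \<in> D" "d \<in> D" "length c = length d" "j < length c"
     "\<forall>l<length c. l \<noteq> j \<longrightarrow> c ! l = d ! l" "x = c ! j" "y = d ! j"
    unfolding fork_def by blast
  have "length c = 2 ^ n" using a D_len by auto
  then show ?thesis using that a by metis
qed

lemma fork_perm:
  assumes "j < 2 ^ n" "(x, y) \<in> fork (2 ^ n - 1) D"
  shows "(x, y) \<in> fork j D"
proof -
  let ?N = "2 ^ n - 1 :: nat"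
  obtain c d where cd: "c \<in> D" "d \<in> D" "\<forall>l<2 ^ n. l \<noteq> ?N \<longrightarrow> c ! l = d ! l" "c ! ?N = x" "d ! ?N = y"
    using fork_E[OF assms(2)] by metis
  define m where "m = xor j ?N"
  have m: "m < 2 ^ n" unfolding m_def using assms(1) by (intro xor_less) auto
  define c' where "c' = map (\<lambda>l. c ! xor l m) [0..<2 ^ n]"
  define d' where "d' = map (\<lambda>l. d ! xor l m) [0..<2 ^ n]"
  have "c' \<in> D" "d' \<in> D" unfolding c'_def d'_def using D_perm m cd by auto
  moreover have "\<forall>l<2 ^ n. l \<noteq> j \<longrightarrow> c' ! l = d' ! l"
  proof (intro allI impI)
    fix l assume l: "l < 2 ^ n" "l \<noteq> j"
    have "xor l m \<noteq> ?N" using xor_cancel l(2) unfolding m_def by blast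
    moreover have "xor l m < 2 ^ n" using xor_less l m by blast
    ultimately show "c' ! l = d' ! l" unfolding c'_def d'_def using cd l by simp
  qed
  ultimately have "(c' ! j, d' ! j) \<in> fork j D" using fork_I[of c' d' j] assms(1) by blast
  moreover have "c' ! j = x" "d' ! j = y" unfolding c'_def d'_def m_def
    using assms(1) cd(4,5) xor_back[of j ?N] by simp_all
  ultimately show ?thesis by simp
qed

lemma rect:
  assumes "x \<in> D" "j < 2 ^ n" "(x ! j, y) \<in> fork j D"
  shows "x[j := y] \<in> D"
proof -
  obtain c d where cd: "c \<in> D" "d \<in> D" "\<forall>l<2 ^ n. l \<noteq> j \<longrightarrow> c ! l = d ! l" "c ! j = x ! j" "d ! j = y"
    using fork_E[OF assms(3)] by metis
  have "apply_cw q (2 ^ n) [x, c, d] = x[j := y]"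
  proof (rule nth_equalityI)
    show "length (apply_cw q (2 ^ n) [x, c, d]) = length (x[j := y])"
      using D_len assms(1) by (simp add: apply_cw_def)
    fix k assume "k < length (apply_cw q (2 ^ n) [x, c, d])"
    then have k: "k < 2 ^ n" by (simp add: apply_cw_def)
    show "apply_cw q (2 ^ n) [x, c, d] ! k = x[j := y] ! k"
    proof (cases "k = j")
      case True
      have "x ! j \<in> A" "y \<in> A" using D_A assms(1,2) cd by auto
      then show ?thesis using True k cd assms D_len q_props(2) by (simp add: apply_cw_q_nth)
    next
      case False
      then show ?thesis using k cd D_A assms D_len q_props(3) by (simp add: apply_cw_q_nth)
    qed
  qed
  then show ?thesis using D_q assms(1) cd by metis
qed

lemma modify:
  assumes "e \<in> D" "length w = 2 ^ n" "\<forall>k<2 ^ n. (e ! k, w ! k) \<in> fork (2 ^ n - 1) D"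
  shows "w \<in> D"
proof -
  define u where "u j = map (\<lambda>k. if k < j then w ! k else e ! k) [0..<2 ^ n]" for j
  have "j \<le> 2 ^ n \<Longrightarrow> u j \<in> D" for j
  proof (induction j)
    case 0
    have "u 0 = e" unfolding u_def using D_len[OF assms(1)] by (auto intro: nth_equalityI)
    then show ?case using assms(1) by simp
  next
    case (Suc j)
    then have j: "j < 2 ^ n" by simp
    have "u (Suc j) = (u j)[j := w ! j]" unfolding u_def using j by (auto simp: nth_list_update intro!: nth_equalityI)
    moreover have "u j ! j = e ! j" unfolding u_def using j by simp
    moreover have "(e ! j, w ! j) \<in> fork j D" using fork_perm[OF j] assms(3) j by blast
    ultimately show ?case using rect[of "u j" j "w ! j"] Suc j by simp
  qed
  moreover have "u (2 ^ n) = w" unfolding u_def using assms(2) by (auto intro: nth_equalityI)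
  ultimately show ?thesis by (metis order.refl)
qed

end



definition sel :: "(nat \<Rightarrow> 'a list) \<Rightarrow> (nat \<Rightarrow> 'a list) \<Rightarrow> (nat \<Rightarrow> bool) \<Rightarrow> nat \<Rightarrow> 'a list" where
  "sel a b \<sigma> i = (if \<sigma> i then b i else a i)"

lemma concat_last: "n \<ge> 1 \<Longrightarrow> concat (map g [0..<n]) = concat (map g [0..<n - 1]) @ g (n - 1)"
  by (cases n) auto

lemma cargs_eq:
  assumes "n \<ge> 1" "\<forall>i<n - 1. g i = (if i \<in> S then b i else a i)" "g (n - 1) = c"
  shows "cargs n S a b c = concat (map g [0..<n])"
proof -
  have eq: "map (\<lambda>i. if i \<in> S then b i else a i) [0..<n - 1] = map g [0..<n - 1]"
    by (rule map_cong) (use assms(2) in auto)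
  show ?thesis unfolding cargs_def concat_last[OF assms(1)] by (simp only: eq assms(3))
qed

lemma list_all2_refl': "list_all2 R xs ys \<Longrightarrow> (\<And>x y. R x y \<Longrightarrow> R x x) \<Longrightarrow> list_all2 R xs xs"
  by (induction rule: list_all2_induct) auto

context msetup begin

lemma fork_cong: "congruence A F (fork (2 ^ n - 1) D)"
proof -
  define N where "N = (2::nat) ^ n - 1"
  let ?R = "fork N D"
  have N: "N < 2 ^ n" unfolding N_def by simp
  have sub: "?R \<subseteq> A \<times> A"
  proof
    fix p assume "p \<in> ?R"
    then obtain x y where p: "p = (x, y)" "(x, y) \<in> ?R" by (cases p) auto
    then obtain c d where "c \<in> D" "d \<in> D" "c ! N = x" "d ! N = y" by (metis fork_E)
    then show "p \<in> A \<times> A" using p D_A N by auto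
  qed
  have refl: "(x, x) \<in> ?R" if x: "x \<in> A" for x
  proof -
    have "0 < n" "(x, x) \<in> \<alpha> 0" using n1 alpha_refl[of 0 x] x by auto
    then have "ctuple n 0 x x \<in> Gen" unfolding Gen_def by blast
    then have c: "ctuple n 0 x x \<in> D" unfolding D_def by (rule gen_sub.gen)
    have "(ctuple n 0 x x ! N, ctuple n 0 x x ! N) \<in> ?R" by (rule fork_I[OF c c N]) auto
    moreover have "ctuple n 0 x x ! N = x" using N by (simp add: ctuple_nth)
    ultimately show ?thesis by simp
  qed
  have sym: "(y, x) \<in> ?R" if xy: "(x, y) \<in> ?R" for x y
  proof -
    obtain c d where cd: "c \<in> D" "d \<in> D" "N < 2 ^ n" "\<forall>l<2 ^ n. l \<noteq> N \<longrightarrow> c ! l = d ! l" "c ! N = x" "d ! N = y"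
      by (rule fork_E[OF xy])
    have "(d ! N, c ! N) \<in> ?R" by (rule fork_I) (use cd N in auto)
    then show ?thesis using cd by simp
  qed
  have trans: "(x, z) \<in> ?R" if xyz: "(x, y) \<in> ?R" "(y, z) \<in> ?R" for x y z
  proof -
    obtain d' e where de: "d' \<in> D" "e \<in> D" "N < 2 ^ n" "\<forall>l<2 ^ n. l \<noteq> N \<longrightarrow> d' ! l = e ! l" "d' ! N = y" "e ! N = z"
      by (rule fork_E[OF xyz(2)])
    have "(d' ! N, x) \<in> ?R" using sym[OF xyz(1)] de by simp
    then have "(d' ! N, x) \<in> fork N D" .
    then have d'': "d'[N := x] \<in> D" using rect[OF de(1) N] by simp
    have l: "length d' = 2 ^ n" using D_len de by auto
    have "(d'[N := x] ! N, e ! N) \<in> ?R"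
      by (rule fork_I[OF d'' de(2) N]) (use de l in auto)
    then show ?thesis using de l N by simp
  qed
  have ops: "(f xs, f ys) \<in> ?R"
    if f: "(k, f) \<in> F" and l: "length xs = k" "length ys = k" and r: "list_all2 (\<lambda>x y. (x, y) \<in> ?R) xs ys" for k f xs ys
  proof -
    define Q where "Q j c d \<longleftrightarrow> c \<in> D \<and> d \<in> D \<and> (\<forall>l<2 ^ n. l \<noteq> N \<longrightarrow> c ! l = d ! l) \<and> c ! N = xs ! j \<and> d ! N = ys ! j" for j c d
    have ex: "\<exists>c d. Q j c d" if j: "j < k" for j
    proof -
      have "(xs ! j, ys ! j) \<in> ?R" using r l j by (simp add: list_all2_conv_all_nth)
      then obtain c d where "c \<in> D" "d \<in> D" "N < 2 ^ n" "\<forall>l<2 ^ n. l \<noteq> N \<longrightarrow> c ! l = d ! l"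
        "c ! N = xs ! j" "d ! N = ys ! j" by (rule fork_E)
      then have "Q j c d" unfolding Q_def by blast
      then show ?thesis by blast
    qed
    define C where "C j = (SOME c. \<exists>d. Q j c d)" for j
    define Dd where "Dd j = (SOME d. Q j (C j) d)" for j
    have QCD: "Q j (C j) (Dd j)" if j: "j < k" for j
    proof -
      have "\<exists>d. Q j (C j) d" unfolding C_def by (rule someI_ex) (use ex[OF j] in blast)
      then show ?thesis unfolding Dd_def by (rule someI_ex)
    qed
    have CD: "\<forall>j<k. C j \<in> D \<and> Dd j \<in> D \<and> (\<forall>l<2 ^ n. l \<noteq> N \<longrightarrow> C j ! l = Dd j ! l) \<and> C j ! N = xs ! j \<and> Dd j ! N = ys ! j"
      using QCD unfolding Q_def by blast
    define u where "u = apply_cw f (2 ^ n) (map C [0..<k])"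
    define v where "v = apply_cw f (2 ^ n) (map Dd [0..<k])"
    have u: "u \<in> D" unfolding u_def D_def by (rule gen_sub.op[OF _ _]) (use f CD in \<open>auto simp: D_def\<close>)
    have v: "v \<in> D" unfolding v_def D_def by (rule gen_sub.op[OF _ _]) (use f CD in \<open>auto simp: D_def\<close>)
    have "\<forall>l<2 ^ n. l \<noteq> N \<longrightarrow> u ! l = v ! l"
    proof (intro allI impI)
      fix l assume l: "l < 2 ^ n" "l \<noteq> N"
      have eq: "map (\<lambda>j. C j ! l) [0..<k] = map (\<lambda>j. Dd j ! l) [0..<k]"
        by (rule map_cong) (use CD l in auto)
      show "u ! l = v ! l" using l by (simp add: u_def v_def apply_cw_def comp_def eq)
    qed
    then have "(u ! N, v ! N) \<in> ?R" by (rule fork_I[OF u v N])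
    moreover have "u ! N = f xs"
    proof -
      have xsN: "map (\<lambda>j. C j ! N) [0..<k] = xs" by (rule nth_equalityI) (use CD l in auto)
      show ?thesis unfolding u_def apply_cw_def using N by (simp add: comp_def xsN)
    qed
    moreover have "v ! N = f ys"
    proof -
      have ysN: "map (\<lambda>j. Dd j ! N) [0..<k] = ys" by (rule nth_equalityI) (use CD l in auto)
      show ?thesis unfolding v_def apply_cw_def using N by (simp add: comp_def ysN)
    qed
    ultimately show ?thesis by simp
  qed
  have "congruence A F ?R" unfolding congruence_def
  proof (intro conjI)
    show "?R \<subseteq> A \<times> A" by (rule sub)
    have "refl_on A ?R" unfolding refl_on_def using refl by blast
    moreover have "sym ?R" unfolding sym_def using sym by blast
    moreover have "trans ?R" unfolding trans_def using trans by blast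
    ultimately show "equiv A ?R" using sub by (intro equivI)
    show "\<forall>(k, f)\<in>F. \<forall>xs ys. length xs = k \<and> length ys = k \<and> list_all2 (\<lambda>x y. (x, y) \<in> ?R) xs ys \<longrightarrow> (f xs, f ys) \<in> ?R"
      using ops by blast
  qed  then show ?thesis unfolding N_def .
qed
end



context msetup begin

lemma fork_refl: "x \<in> A \<Longrightarrow> (x, x) \<in> fork (2 ^ n - 1) D"
  using fork_cong unfolding congruence_def equiv_def refl_on_def by blast

definition mat :: "('a list \<Rightarrow> 'a) \<Rightarrow> (nat \<Rightarrow> 'a list) \<Rightarrow> (nat \<Rightarrow> 'a list) \<Rightarrow> 'a list" where
  "mat t a b = map (\<lambda>k. t (concat (map (sel a b (bit k)) [0..<n]))) [0..<2 ^ n]"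

lemma mat_nth: "k < 2 ^ n \<Longrightarrow> mat t a b ! k = t (concat (map (sel a b (bit k)) [0..<n]))"
  by (simp add: mat_def)

lemma mat_len: "length (mat t a b) = 2 ^ n"
  by (simp add: mat_def)

lemma mat_in_D:
  assumes blk: "\<forall>i<n. length (a i) = length (b i) \<and> list_all2 (\<lambda>x y. (x, y) \<in> \<alpha> i) (a i) (b i)"
    and t: "((\<Sum>i<n. length (a i)), t) \<in> term_ops F"
  shows "mat t a b \<in> D"
proof -
  define gs where "gs = concat (map (\<lambda>i. map (\<lambda>j. ctuple n i (a i ! j) (b i ! j)) [0..<length (a i)]) [0..<n])"
  have lg: "length gs = (\<Sum>i<n. length (a i))" unfolding gs_def by (simp add: len_concat_upt)
  have sG: "set gs \<subseteq> Gen"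
  proof
    fix g assume "g \<in> set gs"
    then obtain i j where ij: "i < n" "j < length (a i)" "g = ctuple n i (a i ! j) (b i ! j)"
      unfolding gs_def by auto
    have "(a i ! j, b i ! j) \<in> \<alpha> i" using blk ij by (simp add: list_all2_conv_all_nth)
    then show "g \<in> Gen" unfolding Gen_def using ij by blast
  qed
  have inD: "apply_cw t (2 ^ n) gs \<in> D" unfolding D_def
    by (rule gen_sub_term[OF t lg]) (use sG Gen_props in \<open>auto intro: gen_sub.gen\<close>)
  have "apply_cw t (2 ^ n) gs = mat t a b"
    unfolding apply_cw_def mat_def
  proof (rule map_cong[OF refl])
    fix k assume "k \<in> set [0..<2 ^ n]"
    then have k: "k < 2 ^ n" by simp
    have "map (\<lambda>g. g ! k) gs = concat (map (\<lambda>i. map (\<lambda>j. ctuple n i (a i ! j) (b i ! j) ! k) [0..<length (a i)]) [0..<n])"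
      unfolding gs_def by (simp add: map_concat comp_def)
    also have "\<dots> = concat (map (sel a b (bit k)) [0..<n])"
    proof (rule arg_cong[where f=concat], rule map_cong[OF refl])
      fix i assume "i \<in> set [0..<n]"
      then have i: "i < n" by simp
      show "map (\<lambda>j. ctuple n i (a i ! j) (b i ! j) ! k) [0..<length (a i)] = sel a b (bit k) i"
        using blk i k by (auto simp: sel_def ctuple_nth intro: nth_equalityI)
    qed
    finally show "t (map (\<lambda>g. g ! k) gs) = t (concat (map (sel a b (bit k)) [0..<n]))" by simp
  qed
  then show ?thesis using inD by simp
qed

lemma cargs_sel:
  assumes "\<forall>i<n - 1. (\<sigma> i \<longleftrightarrow> i \<in> S) \<and> b2 i = b i" "sel a b2 \<sigma> (n - 1) = c"
  shows "cargs n S a b c = concat (map (sel a b2 \<sigma>) [0..<n])"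
proof (rule cargs_eq[OF n1])
  show "\<forall>i<n - 1. sel a b2 \<sigma> i = (if i \<in> S then b i else a i)"
  proof (intro allI impI)
    fix i assume "i < n - 1"
    then have "(\<sigma> i \<longleftrightarrow> i \<in> S)" "b2 i = b i" using assms(1) by auto
    then show "sel a b2 \<sigma> i = (if i \<in> S then b i else a i)" unfolding sel_def by simp
  qed
  show "sel a b2 \<sigma> (n - 1) = c" by (rule assms(2))
qed

lemma fork_central: "centralizes A F n \<alpha> (fork (2 ^ n - 1) D)"
  unfolding centralizes_def
proof (intro allI impI)
  fix a b :: "nat \<Rightarrow> 'a list" and t
  assume blk: "\<forall>i<n. length (a i) = length (b i) \<and> a i \<noteq> b i \<and> list_all2 (\<lambda>x y. (x, y) \<in> \<alpha> i) (a i) (b i)"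
    and t: "((\<Sum>i<n. length (a i)), t) \<in> term_ops F"
    and H: "\<forall>S. S \<subseteq> {..<n - 1} \<and> S \<noteq> {..<n - 1} \<longrightarrow>
             (t (cargs n S a b (a (n - 1))), t (cargs n S a b (b (n - 1)))) \<in> fork (2 ^ n - 1) D"
  define N where "N = (2::nat) ^ n - 1"
  have N: "N < 2 ^ n" unfolding N_def by simp
  have bitN: "bit N i \<longleftrightarrow> i < n" for i unfolding N_def by (rule bit_N)
  define b' where "b' i = (if i = n - 1 then a i else b i)" for i
  have blk1: "\<forall>i<n. length (a i) = length (b i) \<and> list_all2 (\<lambda>x y. (x, y) \<in> \<alpha> i) (a i) (b i)"
    using blk by blast
  have blk2: "\<forall>i<n. length (a i) = length (b' i) \<and> list_all2 (\<lambda>x y. (x, y) \<in> \<alpha> i) (a i) (b' i)"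
  proof (intro allI impI)
    fix i assume i: "i < n"
    show "length (a i) = length (b' i) \<and> list_all2 (\<lambda>x y. (x, y) \<in> \<alpha> i) (a i) (b' i)"
    proof (cases "i = n - 1")
      case True
      have "list_all2 (\<lambda>x y. (x, y) \<in> \<alpha> i) (a i) (a i)"
        by (rule list_all2_refl'[of _ _ "b i"]) (use blk i alpha_A alpha_refl in blast)+
      then show ?thesis using True unfolding b'_def by simp
    next
      case False
      then show ?thesis using blk i unfolding b'_def by simp
    qed
  qed
  define P where "P = mat t a b"
  define E where "E = mat t a b'"
  have PD: "P \<in> D" unfolding P_def by (rule mat_in_D[OF blk1 t])
  have ED: "E \<in> D" unfolding E_def by (rule mat_in_D[OF blk2 t])
  define w where "w = P[N := E ! N]"
  have lw: "length w = 2 ^ n" unfolding w_def P_def by (simp add: mat_len)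
  have "\<forall>k<2 ^ n. (E ! k, w ! k) \<in> fork N D"
  proof (intro allI impI)
    fix k :: nat assume k: "k < 2 ^ n"
    show "(E ! k, w ! k) \<in> fork N D"
    proof (cases "k = N")
      case True
      then show ?thesis unfolding w_def using fork_refl D_A[OF ED k] N P_def mat_len N_def by simp
    next
      case kN: False
      then have wk: "w ! k = P ! k" unfolding w_def by simp
      show ?thesis
      proof (cases "bit k (n - 1)")
        case False
        have eq: "map (sel a b' (bit k)) [0..<n] = map (sel a b (bit k)) [0..<n]"
          by (rule map_cong[OF refl]) (use False in \<open>auto simp: sel_def b'_def\<close>)
        have "E ! k = P ! k" unfolding E_def P_def using k by (simp add: mat_nth eq)
        then show ?thesis using wk fork_refl D_A[OF ED k] N_def by simp
      next
        case kb: True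
        define S where "S = {i. i < n - 1 \<and> bit k i}"
        have Sk: "\<forall>i<n - 1. (bit k i \<longleftrightarrow> i \<in> S) \<and> b' i = b i"
          unfolding S_def b'_def by simp
        have c1: "cargs n S a b (a (n - 1)) = concat (map (sel a b' (bit k)) [0..<n])"
          by (rule cargs_sel[OF Sk]) (simp add: sel_def b'_def kb)
        have c2: "cargs n S a b (b (n - 1)) = concat (map (sel a b (bit k)) [0..<n])"
        proof (rule cargs_sel)
          show "\<forall>i<n - 1. (bit k i \<longleftrightarrow> i \<in> S) \<and> b i = b i" using Sk by simp
          show "sel a b (bit k) (n - 1) = b (n - 1)" using kb by (simp add: sel_def)
        qed
        have "S \<noteq> {..<n - 1}"
        proof
          assume "S = {..<n - 1}"
          then have Sb: "bit k i" if "i < n - 1" for i using that unfolding S_def by blast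
          have "\<forall>i<n. bit k i"
          proof (intro allI impI)
            fix i assume "i < n"
            then have "i < n - 1 \<or> i = n - 1" by linarith
            then show "bit k i" using Sb kb by blast
          qed
          then have "k = N" using eq_by_bits[OF k N] bitN by blast
          then show False using kN by simp
        qed
        moreover have "S \<subseteq> {..<n - 1}" unfolding S_def by auto
        ultimately have "(t (cargs n S a b (a (n - 1))), t (cargs n S a b (b (n - 1)))) \<in> fork N D"
          using H unfolding N_def by blast
        then show ?thesis using c1 c2 wk k unfolding E_def P_def by (simp add: mat_nth)
      qed
    qed
  qed
  then have wD: "w \<in> D" using modify[OF ED lw] N_def by simp
  have "\<forall>l<2 ^ n. l \<noteq> N \<longrightarrow> w ! l = P ! l" unfolding w_def by simp
  then have "(w ! N, P ! N) \<in> fork N D" by (rule fork_I[OF wD PD N])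
  moreover have "w ! N = E ! N" unfolding w_def P_def using N by (simp add: mat_len)
  moreover have "E ! N = t (cargs n {..<n - 1} a b (a (n - 1)))"
  proof -
    have SN: "\<forall>i<n - 1. (bit N i \<longleftrightarrow> i \<in> {..<n - 1}) \<and> b' i = b i"
    proof (intro allI impI)
      fix i assume "i < n - 1"
      then have "i < n" "i \<noteq> n - 1" by auto
      then show "(bit N i \<longleftrightarrow> i \<in> {..<n - 1}) \<and> b' i = b i" using bitN[of i] \<open>i < n - 1\<close> unfolding b'_def by simp
    qed
    have "bit N (n - 1)" using bitN n1 by simp
    then have "cargs n {..<n - 1} a b (a (n - 1)) = concat (map (sel a b' (bit N)) [0..<n])"
      by (intro cargs_sel[OF SN]) (simp add: sel_def b'_def)
    then show ?thesis unfolding E_def using N by (simp add: mat_nth)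
  qed
  moreover have "P ! N = t (cargs n {..<n - 1} a b (b (n - 1)))"
  proof -
    have SN: "\<forall>i<n - 1. (bit N i \<longleftrightarrow> i \<in> {..<n - 1}) \<and> b i = b i"
    proof (intro allI impI)
      fix i assume "i < n - 1"
      then have "i < n" by auto
      then show "(bit N i \<longleftrightarrow> i \<in> {..<n - 1}) \<and> b i = b i" using bitN[of i] \<open>i < n - 1\<close> by simp
    qed
    have "bit N (n - 1)" using bitN n1 by simp
    then have "cargs n {..<n - 1} a b (b (n - 1)) = concat (map (sel a b (bit N)) [0..<n])"
      by (intro cargs_sel[OF SN]) (simp add: sel_def)
    then show ?thesis unfolding P_def using N by (simp add: mat_nth)
  qed
  ultimately show "(t (cargs n {..<n - 1} a b (a (n - 1))), t (cargs n {..<n - 1} a b (b (n - 1)))) \<in> fork (2 ^ n - 1) D"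
    using N_def by simp
qed

end



context msetup begin

lemma sum_const_nat: "(\<Sum>l<m. (L::nat)) = m * L"
  by simp

lemma blockU:
  assumes IL: "\<forall>j<L. I j < n" and lens: "\<forall>i<n. length (a i) = L \<and> length (b i) = L"
    and ab: "\<forall>i<n. \<forall>j<L. a i ! j = P j \<and> b i ! j = (if I j = i then Q j else P j)"
  shows "u (map (\<lambda>j. concat (map (sel a b \<sigma>) [0..<n]) ! (I j * L + j)) [0..<L])
       = u (map (\<lambda>j. if \<sigma> (I j) then Q j else P j) [0..<L])"
proof -
  have "map (\<lambda>j. concat (map (sel a b \<sigma>) [0..<n]) ! (I j * L + j)) [0..<L]
      = map (\<lambda>j. if \<sigma> (I j) then Q j else P j) [0..<L]"
  proof (rule map_cong[OF refl])
    fix j assume "j \<in> set [0..<L]"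
    then have j: "j < L" by simp
    have Ij: "I j < n" using IL j by simp
    have ls: "length (sel a b \<sigma> l) = L" if "l < n" for l using lens that by (simp add: sel_def)
    have "(\<Sum>l<I j. length (sel a b \<sigma> l)) = (\<Sum>l<I j. L)"
      by (rule sum.cong[OF refl]) (use ls Ij in auto)
    then have s: "(\<Sum>l<I j. length (sel a b \<sigma> l)) = I j * L" by simp
    have "concat (map (sel a b \<sigma>) [0..<n]) ! ((\<Sum>l<I j. length (sel a b \<sigma> l)) + j) = sel a b \<sigma> (I j) ! j"
      by (rule nth_concat_off) (use Ij j ls in auto)
    then have "concat (map (sel a b \<sigma>) [0..<n]) ! (I j * L + j) = sel a b \<sigma> (I j) ! j" by (simp only: s)
    also have "\<dots> = (if \<sigma> (I j) then Q j else P j)" using ab Ij j by (simp add: sel_def)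
    finally show "concat (map (sel a b \<sigma>) [0..<n]) ! (I j * L + j) = (if \<sigma> (I j) then Q j else P j)" .
  qed
  then show ?thesis by (rule arg_cong)
qed

lemma blockU_op:
  assumes "(L, u) \<in> term_ops F" "\<forall>j<L. I j < n"
  shows "(n * L, \<lambda>xs. u (map (\<lambda>j. xs ! (I j * L + j)) [0..<L])) \<in> term_ops F"
proof (rule term_ops_reindex[OF assms(1)], intro allI impI)
  fix j assume j: "j < L"
  have "I j * L + j < I j * L + L" using j by simp
  also have "\<dots> = Suc (I j) * L" by simp
  also have "\<dots> \<le> n * L" using assms(2) j by (intro mult_le_mono1) auto
  finally show "I j * L + j < n * L" .
qed

lemma tprime_op:
  assumes U: "(n * L, U) \<in> term_ops F" and W: "(n * L, W) \<in> term_ops F"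
  shows "(n * L + L, \<lambda>xs. q [U (map (\<lambda>i. xs ! i) [0..<n * L]), W (map (\<lambda>i. xs ! i) [0..<n * L]),
            W (map (\<lambda>i. xs ! (if i < (n - 1) * L then i else i + L)) [0..<n * L])]) \<in> term_ops F"
proof -
  have le: "(n - 1) * L + L = n * L" using n1 by (cases n) auto
  have g0: "(n * L + L, \<lambda>xs. U (map (\<lambda>i. xs ! i) [0..<n * L])) \<in> term_ops F"
    by (rule term_ops_reindex[OF U]) auto
  have g1: "(n * L + L, \<lambda>xs. W (map (\<lambda>i. xs ! i) [0..<n * L])) \<in> term_ops F"
    by (rule term_ops_reindex[OF W]) auto
  have g2: "(n * L + L, \<lambda>xs. W (map (\<lambda>i. xs ! (if i < (n - 1) * L then i else i + L)) [0..<n * L])) \<in> term_ops F"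
    by (rule term_ops_reindex[OF W]) (use le in auto)
  define G where "G = [\<lambda>xs. U (map (\<lambda>i. xs ! i) [0..<n * L]), \<lambda>xs. W (map (\<lambda>i. xs ! i) [0..<n * L]),
            \<lambda>xs. W (map (\<lambda>i. xs ! (if i < (n - 1) * L then i else i + L)) [0..<n * L])]"
  have "\<forall>j<3. (n * L + L, G ! j) \<in> term_ops F"
  proof (intro allI impI)
    fix j :: nat assume "j < 3"
    then have "j = 0 \<or> j = 1 \<or> j = 2" by auto
    then show "(n * L + L, G ! j) \<in> term_ops F" using g0 g1 g2 unfolding G_def by auto
  qed
  from term_ops_subst[OF q_props(1) this]
  have "(n * L + L, \<lambda>xs. q (map (\<lambda>j. (G ! j) xs) [0..<3])) \<in> term_ops F" .
  moreover have "(\<lambda>xs. q (map (\<lambda>j. (G ! j) xs) [0..<3])) = (\<lambda>xs. q [U (map (\<lambda>i. xs ! i) [0..<n * L]), W (map (\<lambda>i. xs ! i) [0..<n * L]),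
            W (map (\<lambda>i. xs ! (if i < (n - 1) * L then i else i + L)) [0..<n * L])])"
    by (rule ext) (simp add: G_def numeral_3_eq_3)
  ultimately show ?thesis by simp
qed

lemma cargs_cong: "\<forall>i<n - 1. a' i = a i \<and> b' i = b i \<Longrightarrow> cargs n S a' b' c = cargs n S a b c"
  unfolding cargs_def by (metis (no_types, lifting) atLeastLessThan_iff map_cong set_upt)

lemma tprime_eval:
  assumes lens: "\<forall>i<n. length (a i) = L \<and> length (b i) = L" and l1: "length c1 = L" and l2: "length c2 = L"
  shows "map (\<lambda>i. cargs n S a b (c1 @ c2) ! i) [0..<n * L] = cargs n S a b c1"
    and "map (\<lambda>i. cargs n S a b (c1 @ c2) ! (if i < (n - 1) * L then i else i + L)) [0..<n * L] = cargs n S a b c2"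
proof -
  define ys where "ys = concat (map (\<lambda>i. if i \<in> S then b i else a i) [0..<n - 1])"
  have cy: "cargs n S a b c = ys @ c" for c unfolding cargs_def ys_def by simp
  have "length ys = (\<Sum>l<n - 1. length (if l \<in> S then b l else a l))" unfolding ys_def by (simp add: len_concat_upt)
  also have "\<dots> = (\<Sum>l<n - 1. L)" by (rule sum.cong[OF refl]) (use lens in auto)
  finally have ly: "length ys = (n - 1) * L" by simp
  have le: "(n - 1) * L + L = n * L" using n1 by (cases n) auto
  show "map (\<lambda>i. cargs n S a b (c1 @ c2) ! i) [0..<n * L] = cargs n S a b c1"
    unfolding cy
  proof (rule nth_equalityI)
    show "length (map (\<lambda>i. (ys @ c1 @ c2) ! i) [0..<n * L]) = length (ys @ c1)" using ly l1 le by simp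
    fix i assume "i < length (map (\<lambda>i. (ys @ c1 @ c2) ! i) [0..<n * L])"
    then have i: "i < n * L" by simp
    show "map (\<lambda>i. (ys @ c1 @ c2) ! i) [0..<n * L] ! i = (ys @ c1) ! i"
      using i ly l1 le by (auto simp: nth_append)
  qed
  show "map (\<lambda>i. cargs n S a b (c1 @ c2) ! (if i < (n - 1) * L then i else i + L)) [0..<n * L] = cargs n S a b c2"
    unfolding cy
  proof (rule nth_equalityI)
    show "length (map (\<lambda>i. (ys @ c1 @ c2) ! (if i < (n - 1) * L then i else i + L)) [0..<n * L]) = length (ys @ c2)"
      using ly l2 le by simp
    fix i assume "i < length (map (\<lambda>i. (ys @ c1 @ c2) ! (if i < (n - 1) * L then i else i + L)) [0..<n * L])"
    then have i: "i < n * L" by simp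
    show "map (\<lambda>i. (ys @ c1 @ c2) ! (if i < (n - 1) * L then i else i + L)) [0..<n * L] ! i = (ys @ c2) ! i"
      using i ly l1 l2 le by (auto simp: nth_append intro!: arg_cong[where f="(!) c2"])
  qed
qed

end



context msetup begin

lemma fork_sub:
  assumes gc: "congruence A F \<gamma>" and cen: "centralizes A F n \<alpha> \<gamma>"
    and xy: "(x, y) \<in> fork (2 ^ n - 1) D"
  shows "(x, y) \<in> \<gamma>"
proof -
  define N where "N = (2::nat) ^ n - 1"
  have N: "N < 2 ^ n" unfolding N_def by simp
  have bitN: "bit N i \<longleftrightarrow> i < n" for i unfolding N_def by (rule bit_N)
  have grefl: "(z, z) \<in> \<gamma>" if "z \<in> A" for z
    using gc that unfolding congruence_def equiv_def refl_on_def by blast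
  have gsym: "(z2, z1) \<in> \<gamma>" if "(z1, z2) \<in> \<gamma>" for z1 z2
    using gc that unfolding congruence_def equiv_def sym_def by blast
  have xy': "(x, y) \<in> fork N D" using xy unfolding N_def .
  obtain c d where cd: "c \<in> D" "d \<in> D" "N < 2 ^ n" "\<forall>l<2 ^ n. l \<noteq> N \<longrightarrow> c ! l = d ! l" "c ! N = x" "d ! N = y"
    by (rule fork_E[OF xy'])
  have GL: "\<forall>g\<in>Gen. length g = 2 ^ n" using Gen_props by blast
  obtain gs1 t1 where r1: "set gs1 \<subseteq> Gen" "(length gs1, t1) \<in> term_ops F" "c = apply_cw t1 (2 ^ n) gs1"
    using gen_sub_repr[OF cd(1)[unfolded D_def] GL] by blast
  obtain gs2 t2 where r2: "set gs2 \<subseteq> Gen" "(length gs2, t2) \<in> term_ops F" "d = apply_cw t2 (2 ^ n) gs2"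
    using gen_sub_repr[OF cd(2)[unfolded D_def] GL] by blast
  define L1 where "L1 = length gs1"
  define L2 where "L2 = length gs2"
  define gs where "gs = gs1 @ gs2"
  define L where "L = length gs"
  have LL: "L = L1 + L2" unfolding L_def gs_def L1_def L2_def by simp
  define u where "u = (\<lambda>xs. t1 (map (\<lambda>i. xs ! i) [0..<L1]))"
  define w where "w = (\<lambda>xs. t2 (map (\<lambda>i. xs ! (L1 + i)) [0..<L2]))"
  have uop: "(L, u) \<in> term_ops F" unfolding u_def
    by (rule term_ops_reindex[OF r1(2)[folded L1_def]]) (simp add: LL)
  have wop: "(L, w) \<in> term_ops F" unfolding w_def
    by (rule term_ops_reindex[OF r2(2)[folded L2_def]]) (simp add: LL)
  have cu: "c ! k = u (map (\<lambda>g. g ! k) gs)" if k: "k < 2 ^ n" for k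
  proof -
    have "map (\<lambda>i. map (\<lambda>g. g ! k) gs ! i) [0..<L1] = map (\<lambda>g. g ! k) gs1"
      by (rule nth_equalityI) (auto simp: gs_def L1_def nth_append)
    then show ?thesis using k unfolding u_def r1(3) by (simp add: apply_cw_def)
  qed
  have dw: "d ! k = w (map (\<lambda>g. g ! k) gs)" if k: "k < 2 ^ n" for k
  proof -
    have "map (\<lambda>i. map (\<lambda>g. g ! k) gs ! (L1 + i)) [0..<L2] = map (\<lambda>g. g ! k) gs2"
      by (rule nth_equalityI) (auto simp: gs_def L1_def L2_def nth_append)
    then show ?thesis using k unfolding w_def r2(3) by (simp add: apply_cw_def)
  qed
  have sG: "set gs \<subseteq> Gen" unfolding gs_def using r1 r2 by auto
  define R where "R j = (SOME r. gs ! j = ctuple n (fst r) (fst (snd r)) (snd (snd r)) \<and> fst r < n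
      \<and> (fst (snd r), snd (snd r)) \<in> \<alpha> (fst r))" for j
  define I where "I j = fst (R j)" for j
  define P where "P j = fst (snd (R j))" for j
  define Q where "Q j = snd (snd (R j))" for j
  have IPQ: "gs ! j = ctuple n (I j) (P j) (Q j) \<and> I j < n \<and> (P j, Q j) \<in> \<alpha> (I j)" if j: "j < L" for j
  proof -
    have "gs ! j \<in> Gen" using sG j unfolding L_def by auto
    then obtain i a b where "gs ! j = ctuple n i a b" "i < n" "(a, b) \<in> \<alpha> i" unfolding Gen_def by blast
    then have "\<exists>r. gs ! j = ctuple n (fst r) (fst (snd r)) (snd (snd r)) \<and> fst r < n
      \<and> (fst (snd r), snd (snd r)) \<in> \<alpha> (fst r)" by (intro exI[of _ "(i, a, b)"]) simp
    then have "gs ! j = ctuple n (fst (R j)) (fst (snd (R j))) (snd (snd (R j))) \<and> fst (R j) < n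
      \<and> (fst (snd (R j)), snd (snd (R j))) \<in> \<alpha> (fst (R j))" unfolding R_def by (rule someI_ex)
    then show ?thesis unfolding I_def P_def Q_def .
  qed
  have IL: "\<forall>j<L. I j < n" using IPQ by blast
  have PQA: "P j \<in> A \<and> Q j \<in> A" if "j < L" for j using IPQ[OF that] alpha_A by blast
  have col: "map (\<lambda>g. g ! k) gs = map (\<lambda>j. if bit k (I j) then Q j else P j) [0..<L]" if k: "k < 2 ^ n" for k
    by (rule nth_equalityI) (use IPQ k in \<open>auto simp: L_def ctuple_nth\<close>)
  define cv where "cv \<sigma> = u (map (\<lambda>j. if \<sigma> (I j) then Q j else P j) [0..<L])" for \<sigma>
  define dv where "dv \<sigma> = w (map (\<lambda>j. if \<sigma> (I j) then Q j else P j) [0..<L])" for \<sigma>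
  have mcong: "map (\<lambda>j. if \<sigma> (I j) then Q j else P j) [0..<L] = map (\<lambda>j. if \<tau> (I j) then Q j else P j) [0..<L]"
    if "\<forall>i<n. \<sigma> i = \<tau> i" for \<sigma> \<tau>
    by (rule map_cong[OF refl]) (use that IL in auto)
  have cv_cong: "cv \<sigma> = cv \<tau>" if "\<forall>i<n. \<sigma> i = \<tau> i" for \<sigma> \<tau>
    unfolding cv_def by (rule arg_cong[OF mcong[OF that]])
  have dv_cong: "dv \<sigma> = dv \<tau>" if "\<forall>i<n. \<sigma> i = \<tau> i" for \<sigma> \<tau>
    unfolding dv_def by (rule arg_cong[OF mcong[OF that]])
  have cbit: "c ! k = cv (bit k)" if "k < 2 ^ n" for k using cu[OF that] col[OF that] unfolding cv_def by simp
  have dbit: "d ! k = dv (bit k)" if "k < 2 ^ n" for k using dw[OF that] col[OF that] unfolding dv_def by simp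
  have cvk: "cv \<sigma> = c ! hs n \<sigma>" for \<sigma>
    using cbit[OF hs_less] cv_cong[of \<sigma> "bit (hs n \<sigma>)"] bit_hs by simp
  have dvk: "dv \<sigma> = d ! hs n \<sigma>" for \<sigma>
    using dbit[OF hs_less] dv_cong[of \<sigma> "bit (hs n \<sigma>)"] bit_hs by simp
  have cvA: "cv \<sigma> \<in> A" for \<sigma> using cvk D_A[OF cd(1) hs_less] by simp
  have dvA: "dv \<sigma> \<in> A" for \<sigma> using dvk D_A[OF cd(2) hs_less] by simp
  have agree: "cv \<sigma> = dv \<sigma>" if "i < n" "\<not> \<sigma> i" for \<sigma> i
  proof -
    have "hs n \<sigma> \<noteq> N" using that bit_hs[of n \<sigma> i] bitN[of i] by auto
    then show ?thesis using cvk dvk cd(4) hs_less by simp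
  qed
  have xv: "x = cv (\<lambda>_. True)"
    using cbit[OF N] cd(5) cv_cong[of "bit N" "\<lambda>_. True"] bitN by simp
  have yv: "y = dv (\<lambda>_. True)"
    using dbit[OF N] cd(6) dv_cong[of "bit N" "\<lambda>_. True"] bitN by simp
  show ?thesis
  proof (cases "\<exists>i0<n. \<forall>j<L. I j = i0 \<longrightarrow> P j = Q j")
    case True
    then obtain i0 where i0: "i0 < n" "\<forall>j<L. I j = i0 \<longrightarrow> P j = Q j" by blast
    have me: "map (\<lambda>j. if True then Q j else P j) [0..<L] = map (\<lambda>j. if I j \<noteq> i0 then Q j else P j) [0..<L]"
      by (rule map_cong[OF refl]) (use i0 in auto)
    have "cv (\<lambda>_. True) = cv (\<lambda>l. l \<noteq> i0)" unfolding cv_def by (rule arg_cong[OF me])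
    moreover have "dv (\<lambda>_. True) = dv (\<lambda>l. l \<noteq> i0)" unfolding dv_def by (rule arg_cong[OF me])
    moreover have "cv (\<lambda>l. l \<noteq> i0) = dv (\<lambda>l. l \<noteq> i0)" by (rule agree[OF i0(1)]) simp
    ultimately have xy_eq: "x = y" using xv yv by simp
    have xA: "x \<in> A" using xv cvA by simp
    show ?thesis using grefl[OF xA] xy_eq by simp
  next
    case False
    then have nd: "\<forall>i<n. \<exists>j<L. I j = i \<and> P j \<noteq> Q j" by blast
    define a where "a i = map P [0..<L]" for i :: nat
    define b where "b i = map (\<lambda>j. if I j = i then Q j else P j) [0..<L]" for i
    have lens: "\<forall>i<n. length (a i) = L \<and> length (b i) = L" unfolding a_def b_def by simp
    have ab: "\<forall>i<n. \<forall>j<L. a i ! j = P j \<and> b i ! j = (if I j = i then Q j else P j)"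
      unfolding a_def b_def by simp
    define U where "U = (\<lambda>xs. u (map (\<lambda>j. xs ! (I j * L + j)) [0..<L]))"
    define W where "W = (\<lambda>xs. w (map (\<lambda>j. xs ! (I j * L + j)) [0..<L]))"
    have Uop: "(n * L, U) \<in> term_ops F" unfolding U_def by (rule blockU_op[OF uop IL])
    have Wop: "(n * L, W) \<in> term_ops F" unfolding W_def by (rule blockU_op[OF wop IL])
    have Ucv: "U (concat (map (sel a b \<sigma>) [0..<n])) = cv \<sigma>" for \<sigma>
      unfolding U_def cv_def by (rule blockU[OF IL lens ab])
    have Wdv: "W (concat (map (sel a b \<sigma>) [0..<n])) = dv \<sigma>" for \<sigma>
      unfolding W_def dv_def by (rule blockU[OF IL lens ab])
    define a' where "a' i = (if i = n - 1 then a i @ b i else a i)" for i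
    define b' where "b' i = (if i = n - 1 then b i @ b i else b i)" for i
    define t' where "t' = (\<lambda>xs. q [U (map (\<lambda>i. xs ! i) [0..<n * L]), W (map (\<lambda>i. xs ! i) [0..<n * L]),
            W (map (\<lambda>i. xs ! (if i < (n - 1) * L then i else i + L)) [0..<n * L])])"
    have t'op: "(n * L + L, t') \<in> term_ops F" unfolding t'_def by (rule tprime_op[OF Uop Wop])
    obtain m where m: "n = Suc m" using n1 by (cases n) auto
    have "(\<Sum>i<n. length (a' i)) = (\<Sum>i<m. length (a' i)) + length (a' m)" using m by simp
    also have "(\<Sum>i<m. length (a' i)) = (\<Sum>i<m. L)"
      by (rule sum.cong[OF refl]) (use m in \<open>simp add: a'_def a_def\<close>)
    also have "length (a' m) = L + L" using m by (simp add: a'_def a_def b_def)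
    finally have sumL: "(\<Sum>i<n. length (a' i)) = n * L + L" using m by simp
    have blocks: "\<forall>i<n. length (a' i) = length (b' i) \<and> a' i \<noteq> b' i \<and> list_all2 (\<lambda>x y. (x, y) \<in> \<alpha> i) (a' i) (b' i)"
    proof (intro allI impI)
      fix i assume i: "i < n"
      have la2: "list_all2 (\<lambda>x y. (x, y) \<in> \<alpha> i) (a i) (b i)"
        unfolding list_all2_conv_all_nth
      proof (intro conjI allI impI)
        show "length (a i) = length (b i)" using lens i by simp
        fix j assume "j < length (a i)"
        then have j: "j < L" using lens i by simp
        show "(a i ! j, b i ! j) \<in> \<alpha> i"
        proof (cases "I j = i")
          case True
          then show ?thesis using ab i j IPQ[OF j] by simp
        next
          case False
          then show ?thesis using ab i j PQA[OF j] alpha_refl[OF i] by simp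
        qed
      qed
      have lb2: "list_all2 (\<lambda>x y. (x, y) \<in> \<alpha> i) (b i) (b i)"
        unfolding list_all2_conv_all_nth
      proof (intro conjI allI impI)
        fix j assume "j < length (b i)"
        then have j: "j < L" using lens i by simp
        show "(b i ! j, b i ! j) \<in> \<alpha> i" using ab i j PQA[OF j] alpha_refl[OF i] by simp
      qed simp
      obtain j where j: "j < L" "I j = i" "P j \<noteq> Q j" using nd i by blast
      have neq: "a i \<noteq> b i"
      proof
        assume "a i = b i"
        then have "a i ! j = b i ! j" by simp
        then show False using ab i j by simp
      qed
      show "length (a' i) = length (b' i) \<and> a' i \<noteq> b' i \<and> list_all2 (\<lambda>x y. (x, y) \<in> \<alpha> i) (a' i) (b' i)"
      proof (cases "i = n - 1")
        case True
        then show ?thesis unfolding a'_def b'_def using lens i neq la2 lb2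
          by (auto intro: list_all2_appendI)
      next
        case False
        then show ?thesis unfolding a'_def b'_def using lens i neq la2 by simp
      qed
    qed
    have C: "(t' (cargs n {..<n - 1} a' b' (a' (n - 1))), t' (cargs n {..<n - 1} a' b' (b' (n - 1)))) \<in> \<gamma>"
      if "\<forall>S. S \<subseteq> {..<n - 1} \<and> S \<noteq> {..<n - 1} \<longrightarrow>
             (t' (cargs n S a' b' (a' (n - 1))), t' (cargs n S a' b' (b' (n - 1)))) \<in> \<gamma>"
      using cen blocks t'op sumL that unfolding centralizes_def by simp
    have ab'c: "\<forall>i<n - 1. a' i = a i \<and> b' i = b i" unfolding a'_def b'_def by simp
    have ln1: "length (a (n - 1)) = L" "length (b (n - 1)) = L" using lens n1 by auto
    have ev: "t' (cargs n S a' b' (c1 @ c2)) = q [U (cargs n S a b c1), W (cargs n S a b c1), W (cargs n S a b c2)]"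
      if "length c1 = L" "length c2 = L" for S c1 c2
      unfolding cargs_cong[OF ab'c] t'_def tprime_eval[OF lens that] ..
    define sg where "sg S v = (\<lambda>i. if i = n - 1 then v else i \<in> S)" for S and v :: bool
    have sgc: "cargs n S a b (a (n - 1)) = concat (map (sel a b (sg S False)) [0..<n])"
      "cargs n S a b (b (n - 1)) = concat (map (sel a b (sg S True)) [0..<n])" for S
      by (rule cargs_sel; simp add: sg_def sel_def)+
    have ev1: "t' (cargs n S a' b' (a' (n - 1))) = q [cv (sg S False), dv (sg S False), dv (sg S True)]" for S
      using ev[OF ln1(1) ln1(2), of S] sgc[of S] Ucv Wdv by (simp add: a'_def)
    have ev2: "t' (cargs n S a' b' (b' (n - 1))) = q [cv (sg S True), dv (sg S True), dv (sg S True)]" for S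
      using ev[OF ln1(2) ln1(2), of S] sgc[of S] Ucv Wdv by (simp add: b'_def)
    have hyp: "\<forall>S. S \<subseteq> {..<n - 1} \<and> S \<noteq> {..<n - 1} \<longrightarrow>
             (t' (cargs n S a' b' (a' (n - 1))), t' (cargs n S a' b' (b' (n - 1)))) \<in> \<gamma>"
    proof (intro allI impI)
      fix S assume S: "S \<subseteq> {..<n - 1} \<and> S \<noteq> {..<n - 1}"
      then obtain i1 where i1: "i1 < n - 1" "i1 \<notin> S" by auto
      have ag: "cv (sg S v) = dv (sg S v)" for v
        by (rule agree[of i1]) (use i1 in \<open>auto simp: sg_def\<close>)
      have e1: "t' (cargs n S a' b' (a' (n - 1))) = dv (sg S True)"
        using ev1[of S] ag[of False] q_props(2)[OF dvA dvA] by simp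
      have e2: "t' (cargs n S a' b' (b' (n - 1))) = dv (sg S True)"
        using ev2[of S] ag[of True] q_props(3)[OF dvA dvA] by simp
      show "(t' (cargs n S a' b' (a' (n - 1))), t' (cargs n S a' b' (b' (n - 1)))) \<in> \<gamma>"
        using e1 e2 grefl dvA by simp
    qed
    have fin: "(t' (cargs n {..<n - 1} a' b' (a' (n - 1))), t' (cargs n {..<n - 1} a' b' (b' (n - 1)))) \<in> \<gamma>"
      by (rule C[OF hyp])
    have nn: "n - 1 < n" using n1 by simp
    have ag0: "cv (sg {..<n - 1} False) = dv (sg {..<n - 1} False)"
      by (rule agree[OF nn]) (simp add: sg_def)
    have allT: "\<forall>i<n. sg {..<n - 1} True i = True" unfolding sg_def by auto
    have f1: "t' (cargs n {..<n - 1} a' b' (a' (n - 1))) = y"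
      using ev1[of "{..<n - 1}"] ag0 q_props(2)[OF dvA dvA] dv_cong[OF allT] yv by simp
    have f2: "t' (cargs n {..<n - 1} a' b' (b' (n - 1))) = x"
      using ev2[of "{..<n - 1}"] q_props(3)[OF dvA cvA] cv_cong[OF allT] xv by simp
    show ?thesis using fin f1 f2 gsym by simp
  qed
qed

end


theorem mainTheorem1:
  fixes A :: "'a set" and F :: "'a operation set" and n :: nat
    and \<alpha> :: "nat \<Rightarrow> ('a \<times> 'a) set"
  assumes "algebra A F"
    and "malcev A F"
    and "n \<ge> 1"
    and "\<forall>i<n. congruence A F (\<alpha> i)"
  shows "commutator A F n \<alpha> = fork (2 ^ n - 1) (Delta A F n \<alpha>)"
proof -
  interpret msetup A F n \<alpha> using assms by unfold_locales
  have "commutator A F n \<alpha> = fork (2 ^ n - 1) D"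
  proof
    show "commutator A F n \<alpha> \<subseteq> fork (2 ^ n - 1) D"
      unfolding commutator_def by (rule Inter_lower) (use fork_cong fork_central in blast)
    show "fork (2 ^ n - 1) D \<subseteq> commutator A F n \<alpha>"
    proof
      fix p assume p: "p \<in> fork (2 ^ n - 1) D"
      obtain x y where pxy: "p = (x, y)" by (cases p)
      show "p \<in> commutator A F n \<alpha>"
        unfolding commutator_def using fork_sub p pxy by blast
    qed
  qed
  then show ?thesis using Delta_eq by simp
qed

end
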